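(* Let $A$ be a finitely generated associative algebra with $M_N(A)=0$ for some $N$. For $a,b,d\in A$ and $m\in M_k(A)$, the element $[b,d][a,m]+[a,d][b,m]$ lies in $M_{k+2}(A)$.
   Context: $L_1=A$, $L_k=[A,L_{k-1}]$, $M_k=AL_kA$ (two-sided ideal generated by $L_k$). *)

theory Defs
  imports Main
begin

text \<open>An associative unital algebra over a commutative ring 'k: the ring structure
  is that of the type 'a, and sm is the scalar multiplication.\<close>

definition is_algebra :: "('k::comm_ring_1 \<Rightarrow> 'a::ring_1 \<Rightarrow> 'a) \<Rightarrow> bool" where
  "is_algebra sm \<longleftrightarrow>
     (\<forall>c x y. sm c (x + y) = sm c x + sm c y) \<and>
     (\<forall>c d x. sm (c + d) x = sm c x + sm d x) \<and>
     (\<forall>c d x. sm (c * d) x = sm c (sm d x)) \<and>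
     (\<forall>x. sm 1 x = x) \<and>
     (\<forall>c x y. sm c (x * y) = sm c x * y) \<and>
     (\<forall>c x y. sm c (x * y) = x * sm c y)"

inductive_set gen_subalg :: "('k::comm_ring_1 \<Rightarrow> 'a::ring_1 \<Rightarrow> 'a) \<Rightarrow> 'a set \<Rightarrow> 'a set"
  for sm S where
  gen: "x \<in> S \<Longrightarrow> x \<in> gen_subalg sm S"
| one: "1 \<in> gen_subalg sm S"
| add: "x \<in> gen_subalg sm S \<Longrightarrow> y \<in> gen_subalg sm S \<Longrightarrow> x + y \<in> gen_subalg sm S"
| mult: "x \<in> gen_subalg sm S \<Longrightarrow> y \<in> gen_subalg sm S \<Longrightarrow> x * y \<in> gen_subalg sm S"
| smult: "x \<in> gen_subalg sm S \<Longrightarrow> sm c x \<in> gen_subalg sm S"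

definition fin_gen :: "('k::comm_ring_1 \<Rightarrow> 'a::ring_1 \<Rightarrow> 'a) \<Rightarrow> bool" where
  "fin_gen sm \<longleftrightarrow> (\<exists>S. finite S \<and> gen_subalg sm S = UNIV)"

inductive_set lin_span :: "('k::comm_ring_1 \<Rightarrow> 'a::ring_1 \<Rightarrow> 'a) \<Rightarrow> 'a set \<Rightarrow> 'a set"
  for sm S where
  zero: "0 \<in> lin_span sm S"
| gen: "x \<in> S \<Longrightarrow> x \<in> lin_span sm S"
| add: "x \<in> lin_span sm S \<Longrightarrow> y \<in> lin_span sm S \<Longrightarrow> x + y \<in> lin_span sm S"
| smult: "x \<in> lin_span sm S \<Longrightarrow> sm c x \<in> lin_span sm S"

inductive_set ideal_gen :: "('k::comm_ring_1 \<Rightarrow> 'a::ring_1 \<Rightarrow> 'a) \<Rightarrow> 'a set \<Rightarrow> 'a set"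
  for sm S where
  zero: "0 \<in> ideal_gen sm S"
| gen: "x \<in> S \<Longrightarrow> x \<in> ideal_gen sm S"
| add: "x \<in> ideal_gen sm S \<Longrightarrow> y \<in> ideal_gen sm S \<Longrightarrow> x + y \<in> ideal_gen sm S"
| smult: "x \<in> ideal_gen sm S \<Longrightarrow> sm c x \<in> ideal_gen sm S"
| lmult: "x \<in> ideal_gen sm S \<Longrightarrow> a * x \<in> ideal_gen sm S"
| rmult: "x \<in> ideal_gen sm S \<Longrightarrow> x * a \<in> ideal_gen sm S"

definition comm :: "'a::ring \<Rightarrow> 'a \<Rightarrow> 'a" where
  "comm a b = a * b - b * a"

text \<open>Lower central series: L 1 = A, L (k+1) = [A, L k] (linear span of commutators).
  Index 0 is a dummy (set equal to A).\<close>
fun LCS :: "('k::comm_ring_1 \<Rightarrow> 'a::ring_1 \<Rightarrow> 'a) \<Rightarrow> nat \<Rightarrow> 'a set" where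
  "LCS sm 0 = UNIV"
| "LCS sm (Suc 0) = UNIV"
| "LCS sm (Suc (Suc n)) = lin_span sm {comm a x | a x. x \<in> LCS sm (Suc n)}"

definition MI :: "('k::comm_ring_1 \<Rightarrow> 'a::ring_1 \<Rightarrow> 'a) \<Rightarrow> nat \<Rightarrow> 'a set" where
  "MI sm k = ideal_gen sm (LCS sm k)"

end

theory Submission imports Defs begin

definition idl :: "'a::ring_1 set \<Rightarrow> bool" where
  "idl I \<longleftrightarrow> 0 \<in> I \<and> (\<forall>x\<in>I. \<forall>y\<in>I. x + y \<in> I) \<and> (\<forall>x\<in>I. \<forall>a. a * x \<in> I) \<and> (\<forall>x\<in>I. \<forall>a. x * a \<in> I)"

lemma idl_add: "idl I \<Longrightarrow> x \<in> I \<Longrightarrow> y \<in> I \<Longrightarrow> x + y \<in> I" unfolding idl_def by blast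
lemma idl_lm: "idl I \<Longrightarrow> x \<in> I \<Longrightarrow> a * x \<in> I" unfolding idl_def by blast
lemma idl_rm: "idl I \<Longrightarrow> x \<in> I \<Longrightarrow> x * a \<in> I" unfolding idl_def by blast
lemma idl_0: "idl I \<Longrightarrow> 0 \<in> I" unfolding idl_def by blast
lemma idl_neg: "idl I \<Longrightarrow> x \<in> I \<Longrightarrow> - x \<in> I"
  using idl_lm[of I x "-1"] by simp
lemma idl_sub: "idl I \<Longrightarrow> x \<in> I \<Longrightarrow> y \<in> I \<Longrightarrow> x - y \<in> I"
  using idl_add[of I x "-y"] idl_neg[of I y] by simp
lemma idl_comm1: "idl I \<Longrightarrow> x \<in> I \<Longrightarrow> comm a x \<in> I"
  unfolding comm_def by (intro idl_sub idl_lm idl_rm)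
lemma idl_comm2: "idl I \<Longrightarrow> x \<in> I \<Longrightarrow> comm x a \<in> I"
  unfolding comm_def by (intro idl_sub idl_lm idl_rm)
lemma idl_eq: "x \<in> I \<Longrightarrow> x = y \<Longrightarrow> y \<in> I" by simp

lemma comm_neg: "comm (- p) y = comm y (p::'a::ring)"
  by (simp add: comm_def)

definition W :: "'a::ring_1 \<Rightarrow> 'a \<Rightarrow> 'a \<Rightarrow> 'a \<Rightarrow> 'a \<Rightarrow> 'a" where
  "W L r s t z = comm r s * comm t (comm z L)"
definition U :: "'a::ring_1 \<Rightarrow> 'a \<Rightarrow> 'a \<Rightarrow> 'a \<Rightarrow> 'a \<Rightarrow> 'a" where
  "U L p q r c = comm (comm p q) r * comm c L"

context
  fixes I :: "'a::ring_1 set" and L :: 'a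
  assumes I: "idl I" and H: "\<And>p q r. comm p (comm q (comm r L)) \<in> I"
begin

lemma H': "comm (comm q (comm r L)) p \<in> I"
  using H[of "-p" q r] by (simp add: comm_neg)

lemma F2: "comm (comm p q) (comm r L) \<in> I"
proof -
  have "comm (comm p q) (comm r L) = comm p (comm q (comm r L)) - comm q (comm p (comm r L))"
    by (simp add: comm_def algebra_simps)
  thus ?thesis using idl_sub[OF I H H] by simp
qed

lemma F3: "W L r s1 s2 x + W L r s2 s1 x \<in> I"
proof -
  have e: "W L r s1 s2 x + W L r s2 s1 x = comm r (comm (s1*s2) (comm x L))
     - s1 * comm r (comm s2 (comm x L)) - comm r (comm s1 (comm x L)) * s2
     + comm (comm r s2) (comm s1 (comm x L))"
    by (simp add: W_def comm_def algebra_simps)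
  show ?thesis unfolding e
    by (intro idl_add idl_sub idl_lm idl_rm I H)
qed

lemma A1: "W L r s t z + W L t s r z \<in> I"
proof -
  have e: "W L r s t z + W L t s r z = - (W L s r t z + W L s t r z)"
    by (simp add: W_def comm_def algebra_simps)
  show ?thesis unfolding e by (intro idl_neg I F3)
qed

lemma Z1: "W L (comm p q) s t z \<in> I"
proof -
  have "W L t s (comm p q) z \<in> I" unfolding W_def by (intro idl_lm I F2)
  hence e: "W L (comm p q) s t z = (W L (comm p q) s t z + W L t s (comm p q) z) - W L t s (comm p q) z"
    by simp
  show ?thesis by (subst e, intro idl_sub I A1 \<open>W L t s (comm p q) z \<in> I\<close>)
qed

lemma F5: "comm (comm (comm p q) r) (comm c L) \<in> I"
proof -
  have e: "comm (comm (comm p q) r) (comm c L) = comm (comm p q) (comm r (comm c L)) - comm r (comm (comm p q) (comm c L))"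
    by (simp add: comm_def algebra_simps)
  show ?thesis by (subst e, intro idl_sub I H idl_comm1 F2)
qed

lemma F6: "U L p q r c + U L p q c r \<in> I"
proof -
  have e: "U L p q r c + U L p q c r = comm (comm p q) (comm (r*c) L) - comm (comm p q) (comm r L) * c
     + comm (comm (comm p q) c) (comm r L) - r * comm (comm p q) (comm c L)"
    by (simp add: U_def comm_def algebra_simps)
  show ?thesis by (subst e, intro idl_sub idl_add I F2 F5 idl_lm idl_rm)
qed

lemma F7: "U L p q1 r q2 + U L p q2 r q1 \<in> I"
proof -
  have e: "U L p q1 r q2 + U L p q2 r q1 = - comm r (comm p (comm (q1*q2) L))
     + comm (comm (comm p q2) r) (comm q1 L)
     + (W L p q1 r q2 + W L r q1 p q2) + (W L r q2 p q1 + W L p q2 r q1)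
     + q1 * comm r (comm p (comm q2 L)) + comm r (comm p (comm q1 L)) * q2
     - comm (comm r q2) (comm p (comm q1 L)) - comm (comm p q2) (comm r (comm q1 L))"
    by (simp add: U_def W_def comm_def algebra_simps)
  show ?thesis by (subst e, intro idl_sub idl_add idl_neg I H F5 A1 idl_lm idl_rm)
qed

lemma C1: "U L P x d c - U L x c d P \<in> I"
proof -
  have e: "U L P x d c - U L x c d P = - (U L x P d c + U L x c d P)"
    by (simp add: U_def comm_def algebra_simps)
  show ?thesis by (subst e, intro idl_neg I F7)
qed

lemma key: "(comm b d * comm a x + comm a d * comm b x) * comm c L \<in> I"
proof -
  have t3: "W L (comm a x) d b c \<in> I" by (rule Z1)
  have t4: "U L a x (comm b d) c \<in> I"
  proof -
    have e: "U L a x (comm b d) c = (U L a x (comm b d) c + U L a x c (comm b d))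
        - (W L (comm a x) c b d - W L (comm a x) c d b)"
      by (simp add: U_def W_def comm_def algebra_simps)
    show ?thesis by (subst e, intro idl_sub I F6 Z1)
  qed
  have t5: "U L (comm x c) d a b \<in> I"
  proof -
    have e: "U L (comm x c) d a b = (U L (comm x c) d a b - U L d b a (comm x c))
        + (W L (comm d b) a x c - W L (comm d b) a c x)"
      by (simp add: U_def W_def comm_def algebra_simps)
    show ?thesis by (subst e, intro idl_sub idl_add I C1 Z1)
  qed
  have e: "(comm b d * comm a x + comm a d * comm b x) * comm c L =
      (U L (a*b) x d c - U L x c d (a*b)) - a * (U L b x d c - U L x c d b)
      - (U L a x d c - U L x c d a) * b - W L (comm a x) d b c - U L a x (comm b d) c
      + U L (comm x c) d a b"
    by (simp add: U_def W_def comm_def algebra_simps)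
  show ?thesis by (subst e, intro idl_sub idl_add idl_lm idl_rm I C1 t3 t4 t5)
qed

end

lemma idl_MI: "idl (ideal_gen sm S)"
  unfolding idl_def by (auto intro: ideal_gen.intros)

lemma idl_MIk: "idl (MI sm k)"
  unfolding MI_def by (rule idl_MI)

lemma sm_diff:
  assumes "is_algebra sm" shows "sm c (u - v) = sm c u - sm c v"
proof -
  have "sm c (u - v) + sm c v = sm c u"
    using assms unfolding is_algebra_def by (metis diff_add_cancel)
  thus ?thesis by (simp add: eq_diff_eq)
qed

lemma sm_comm:
  assumes "is_algebra sm" shows "comm a (sm c m) = sm c (comm a m)"
proof -
  have "comm a (sm c m) = sm c (a*m) - sm c (m*a)"
    using assms unfolding is_algebra_def comm_def by metis
  thus ?thesis using sm_diff[OF assms] by (simp add: comm_def)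
qed

lemma sm_ml: "is_algebra sm \<Longrightarrow> a * sm c m = sm c (a * m)"
  unfolding is_algebra_def by metis
lemma sm_mr: "is_algebra sm \<Longrightarrow> sm c m * a = sm c (m * a)"
  unfolding is_algebra_def by metis
lemma sm_add: "is_algebra sm \<Longrightarrow> sm c (x + y) = sm c x + sm c y"
  unfolding is_algebra_def by metis

lemma LCS_step: "1 \<le> k \<Longrightarrow> x \<in> LCS sm k \<Longrightarrow> comm a x \<in> LCS sm (Suc k)"
  by (cases k) (auto intro: lin_span.gen)

lemma lin_span_mono: "x \<in> lin_span sm S \<Longrightarrow> S \<subseteq> T \<Longrightarrow> x \<in> lin_span sm T"
  by (induction rule: lin_span.induct) (auto intro: lin_span.intros)

lemma LCS_mono: "LCS sm (Suc (Suc k)) \<subseteq> LCS sm (Suc k)"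
proof (induction k)
  case 0 then show ?case by simp
next
  case (Suc k)
  show ?case
  proof
    fix y assume "y \<in> LCS sm (Suc (Suc (Suc k)))"
    hence "y \<in> lin_span sm {comm a x |a x. x \<in> LCS sm (Suc (Suc k))}" by simp
    moreover have "{comm a x |a x. x \<in> LCS sm (Suc (Suc k))} \<subseteq> {comm a x |a x. x \<in> LCS sm (Suc k)}"
      using Suc by blast
    ultimately have "y \<in> lin_span sm {comm a x |a x. x \<in> LCS sm (Suc k)}" by (rule lin_span_mono)
    thus "y \<in> LCS sm (Suc (Suc k))" by simp
  qed
qed

lemma LCS_mono': "1 \<le> k \<Longrightarrow> x \<in> LCS sm (Suc k) \<Longrightarrow> x \<in> LCS sm k"
  using LCS_mono[of sm "k - 1"] by (cases k) auto

lemma span_mem: "l \<in> LCS sm k \<Longrightarrow> x * l \<in> lin_span sm {x * l |x l. l \<in> LCS sm k}"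
  by (rule lin_span.gen) blast

lemma span_lmult:
  assumes A: "is_algebra sm"
  shows "m \<in> lin_span sm {x * l |x l. l \<in> LCS sm k} \<Longrightarrow> a * m \<in> lin_span sm {x * l |x l. l \<in> LCS sm k}"
proof (induction rule: lin_span.induct)
  case zero then show ?case by (simp add: lin_span.zero)
next
  case (gen y)
  then obtain x l where "y = x * l" "l \<in> LCS sm k" by blast
  hence "a * y = (a * x) * l" by (simp add: mult.assoc)
  then show ?case using span_mem[OF \<open>l \<in> LCS sm k\<close>, of "a*x"] by simp
next
  case (add x y) then show ?case by (simp add: distrib_left lin_span.add)
next
  case (smult x c) then show ?case by (simp add: sm_ml[OF A] lin_span.smult)
qed

lemma span_rmult:
  assumes A: "is_algebra sm" and k: "1 \<le> k"
  shows "m \<in> lin_span sm {x * l |x l. l \<in> LCS sm k} \<Longrightarrow> m * a \<in> lin_span sm {x * l |x l. l \<in> LCS sm k}"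
proof (induction rule: lin_span.induct)
  case zero then show ?case by (simp add: lin_span.zero)
next
  case (gen y)
  then obtain x l where y: "y = x * l" "l \<in> LCS sm k" by blast
  have e: "y * a = (x * a) * l + x * comm (- a) l"
    unfolding y by (simp add: comm_def algebra_simps)
  have "comm (- a) l \<in> LCS sm k" by (rule LCS_mono'[OF k LCS_step[OF k y(2)]])
  then show ?case unfolding e by (rule lin_span.add[OF span_mem[OF y(2)] span_mem])
next
  case (add x y) then show ?case by (simp add: distrib_right lin_span.add)
next
  case (smult x c) then show ?case by (simp add: sm_mr[OF A] lin_span.smult)
qed

lemma decomp:
  assumes A: "is_algebra sm" and k: "1 \<le> k"
  shows "m \<in> MI sm k \<Longrightarrow> m \<in> lin_span sm {x * l |x l. l \<in> LCS sm k}"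
  unfolding MI_def
proof (induction rule: ideal_gen.induct)
  case zero then show ?case by (rule lin_span.zero)
next
  case (gen x)
  have "x = 1 * x" by simp
  then show ?case using span_mem[OF gen, of 1] by simp
next
  case (add x y) then show ?case by (intro lin_span.add add.IH)
next
  case (smult x c) then show ?case by (intro lin_span.smult smult.IH)
next
  case (lmult x a) show ?case using span_lmult[OF A lmult.IH] .
next
  case (rmult x a) show ?case using span_rmult[OF A k rmult.IH] .
qed

lemma L_in_MI: "x \<in> LCS sm k \<Longrightarrow> x \<in> MI sm k"
  unfolding MI_def by (rule ideal_gen.gen)

lemma base:
  assumes k: "1 \<le> k" and l: "l \<in> LCS sm k"
  shows "comm b d * comm a l + comm a d * comm b l \<in> MI sm (k + 2)"
proof -
  have L2: "\<And>p q y. y \<in> LCS sm k \<Longrightarrow> comm p (comm q y) \<in> MI sm (k + 2)"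
  proof -
    fix p q y assume y: "y \<in> LCS sm k"
    have "comm q y \<in> LCS sm (Suc k)" by (rule LCS_step[OF k y])
    hence "comm p (comm q y) \<in> LCS sm (Suc (Suc k))" using LCS_step[of "Suc k" "comm q y" sm p] by simp
    thus "comm p (comm q y) \<in> MI sm (k + 2)" by (simp add: L_in_MI)
  qed
  have e: "comm b d * comm a l + comm a d * comm b l =
     comm (- d) (comm (a*b) l) - a * comm (- d) (comm b l) - comm (- d) (comm a l) * b
     - comm (- comm b d) (comm a l)"
    by (simp add: comm_def algebra_simps)
  have I: "idl (MI sm (k+2))" by (rule idl_MIk)
  show ?thesis unfolding e
    by (rule idl_sub[OF I idl_sub[OF I idl_sub[OF I L2[OF l] idl_lm[OF I L2[OF l]]] idl_rm[OF I L2[OF l]]] L2[OF l]])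
qed

lemma R:
  assumes A: "is_algebra sm" and k: "1 \<le> k" and l: "l \<in> LCS sm k"
  shows "(comm b d * comm a x + comm a d * comm b x) * l \<in> MI sm (k + 2)"
proof (cases "k = 1")
  case True
  have "comm b d * comm a x + comm a d * comm b x \<in> MI sm (1 + 2)"
    by (rule base) auto
  then have "(comm b d * comm a x + comm a d * comm b x) * l \<in> MI sm (1 + 2)"
    by (rule idl_rm[OF idl_MIk])
  then show ?thesis using True by simp
next
  case False
  then obtain j where j: "k = Suc (Suc j)" using k by (cases k; cases "k - 1") auto
  have "l \<in> lin_span sm {comm a x |a x. x \<in> LCS sm (Suc j)}" using l unfolding j by simp
  then show ?thesis
  proof (induction rule: lin_span.induct)
    case zero then show ?case by (simp add: MI_def ideal_gen.zero)
  next
    case (gen y)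
    then obtain c lam where y: "y = comm c lam" "lam \<in> LCS sm (Suc j)" by blast
    have H: "\<And>p q r. comm p (comm q (comm r lam)) \<in> MI sm (k + 2)"
    proof -
      fix p q r
      have "comm r lam \<in> LCS sm (Suc (Suc j))" by (rule LCS_step[OF _ y(2)]) simp
      hence "comm q (comm r lam) \<in> LCS sm (Suc (Suc (Suc j)))" by (rule LCS_step[rotated]) simp
      hence "comm p (comm q (comm r lam)) \<in> LCS sm (Suc (Suc (Suc (Suc j))))" by (rule LCS_step[rotated]) simp
      hence "comm p (comm q (comm r lam)) \<in> MI sm (Suc (Suc (Suc (Suc j))))" by (rule L_in_MI)
      thus "comm p (comm q (comm r lam)) \<in> MI sm (k + 2)" using j by simp
    qed
    show ?case unfolding y(1) by (rule key[OF idl_MIk H])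
  next
    case (add u v) show ?case unfolding distrib_left MI_def by (rule ideal_gen.add[OF add.IH[unfolded MI_def]])
  next
    case (smult u c)
    have "(comm b d * comm a x + comm a d * comm b x) * sm c u = sm c ((comm b d * comm a x + comm a d * comm b x) * u)"
      by (rule sm_ml[OF A])
    then show ?case using smult.IH unfolding MI_def by (simp only: ideal_gen.smult)
  qed
qed

theorem lemma3p6:
  fixes sm :: "'k::comm_ring_1 \<Rightarrow> 'a::ring_1 \<Rightarrow> 'a"
    and a b d m :: 'a and k :: nat
  assumes "is_algebra sm"
    and "fin_gen sm"
    and "\<exists>N. MI sm N = {0}"
    and "k \<ge> 1"
    and "m \<in> MI sm k"
  shows "comm b d * comm a m + comm a d * comm b m \<in> MI sm (k + 2)"
proof -
  note A = assms(1) and k = assms(4)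
  have I: "idl (MI sm (k+2))" by (simp add: MI_def idl_MI)
  have "m \<in> lin_span sm {x * l |x l. l \<in> LCS sm k}" by (rule decomp[OF A k assms(5)])
  then have "\<forall>a b d. comm b d * comm a m + comm a d * comm b m \<in> MI sm (k + 2)"
  proof (induction rule: lin_span.induct)
    case zero then show ?case by (simp add: comm_def MI_def ideal_gen.zero)
  next
    case (gen y)
    then obtain x l where y: "y = x * l" "l \<in> LCS sm k" by blast
    show ?case
    proof (intro allI)
      fix a b d
      have e: "comm b d * comm a y + comm a d * comm b y =
         (comm b d * comm a x + comm a d * comm b x) * l
         + (comm b (d*x) * comm a l + comm a (d*x) * comm b l)
         - d * (comm b x * comm a l + comm a x * comm b l)"
        unfolding y(1) by (simp add: comm_def algebra_simps)
      show "comm b d * comm a y + comm a d * comm b y \<in> MI sm (k + 2)"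
        unfolding e by (rule idl_sub[OF I idl_add[OF I R[OF A k y(2)] base[OF k y(2)]] idl_lm[OF I base[OF k y(2)]]])
    qed
  next
    case (add u v)
    show ?case
    proof (intro allI)
      fix a b d
      have e: "comm b d * comm a (u+v) + comm a d * comm b (u+v) =
        (comm b d * comm a u + comm a d * comm b u) + (comm b d * comm a v + comm a d * comm b v)"
        by (simp add: comm_def algebra_simps)
      show "comm b d * comm a (u+v) + comm a d * comm b (u+v) \<in> MI sm (k + 2)"
        by (subst e, intro idl_add I add.IH[rule_format])
    qed
  next
    case (smult u c)
    show ?case
    proof (intro allI)
      fix a b d
      have e: "comm b d * comm a (sm c u) + comm a d * comm b (sm c u) =
        sm c (comm b d * comm a u + comm a d * comm b u)"
        by (simp only: sm_comm[OF A] sm_ml[OF A] sm_add[OF A])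
      show "comm b d * comm a (sm c u) + comm a d * comm b (sm c u) \<in> MI sm (k + 2)"
        unfolding e MI_def by (rule ideal_gen.smult, fold MI_def, rule smult.IH[rule_format])
    qed
  qed
  thus ?thesis by blast
qed

end
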